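(* Under the hypotheses and notation of the main entropy theorem (symmetric parameters $q_0=q_1=\sqrt{1-Q}$, $W=(I_{A_1}\otimes V)\mathbf{Rw}$ with the stated norm conditions on $\ket{e_i},\ket{f_i}$), let $\ket{\Phi^\pm}=\tfrac1{\sqrt2}(\ket{00}\pm\ket{11})$, $\tau=W\ket{\Phi^+}\bra{\Phi^+}W^*$, $\mu=W\ket{\Phi^-}\bra{\Phi^-}W^*$, and $\sigma=\tfrac12W(\ket{00}\bra{00}+\ket{11}\bra{11})W^*$. Then \[ \sigma_{A_1^ZE}=\tfrac12\tau_{A_1^ZE}+\tfrac12\mu_{A_1^ZE} \qquad\text{and}\qquad \tfrac12\big\|\tau_{A_1^ZE}-\mu_{A_1^ZE}\big\|_1\le 4Q(1-Q). \]
   Context: Setting: $\mathcal{H}_{A_1}=\mathcal{H}_{A_2}=\mathbb{C}^2$, finite-dimensional $\mathcal{H}_E$ with orthonormal $\ket0_E,\ket1_E$; $\eta\in\mathbb{C}$, $|\eta|\le1$, $\ket{e}=\eta\ket0_E+\sqrt{1-|\eta|^2}\ket1_E$, $\ket{f}=-\overline\eta\ket0_E+\sqrt{1-|\eta|^2}\ket1_E$; $\mathbf{Rw}\ket{00}=\sqrt{1-Q}\ket{000}+\sqrt{Q}\ket{1}\ket0\ket f$, $\mathbf{Rw}\ket{11}=\sqrt Q\ket0\ket1\ket e+\sqrt{1-Q}\ket{110}$ (order $A_1A_2E$); $V$ unitary on $\mathcal{H}_{A_2}\otimes\mathcal{H}_E$ with $V\ket0\ket0_E=\ket0\ket{e_0}+\ket1\ket{e_1}$,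 $V\ket1\ket0_E=\ket0\ket{e_2}+\ket1\ket{e_3}$, $V\ket0\ket f=\ket0\ket{f_0}+\ket1\ket{f_1}$, $V\ket1\ket e=\ket0\ket{f_2}+\ket1\ket{f_3}$, and assumed $\|e_0\|^2=\|e_3\|^2=\|f_0\|^2=\|f_3\|^2=1-Q$, $\|e_1\|^2=\|e_2\|^2=\|f_1\|^2=\|f_2\|^2=Q$. For a state $\rho$ on $A_1A_2E$, $\rho_{A_1^ZE}=\sum_{a}\ket a\bra a\otimes\mathrm{tr}_{A_1A_2}[(\ket a\bra a_{A_1}\otimes I)\rho]$. $\|\cdot\|_1$ is the trace norm. *)

theory Defs
  imports "HOL-Analysis.Analysis"
begin

text \<open>Finite-dimensional Hilbert spaces are modelled as complex^'i for a finite index type 'i;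
  linear maps as matrices complex^'cols^'rows (entry A $ row $ col).
  Qubits use the index type 2 with computational basis ket 0, ket 1.
  Tensor index order is A1 x (A2 x E).\<close>

definition ket :: "'i::finite \<Rightarrow> complex^'i" where
  "ket a = (\<chi> j. if j = a then 1 else 0)"

definition cinner :: "complex^'i::finite \<Rightarrow> complex^'i \<Rightarrow> complex" where
  "cinner u v = (\<Sum>i\<in>UNIV. cnj (u $ i) * v $ i)"

definition tensv :: "complex^'i::finite \<Rightarrow> complex^'j::finite \<Rightarrow> complex^('i \<times> 'j)" where
  "tensv u v = (\<chi> p. u $ fst p * v $ snd p)"

definition kron :: "complex^'m^'n \<Rightarrow> complex^'p^'q \<Rightarrow> complex^('m \<times> 'p)^('n \<times> 'q)" where
  "kron A B = (\<chi> r c. A $ fst r $ fst c * B $ snd r $ snd c)"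

definition adj :: "complex^'m^'n \<Rightarrow> complex^'n^'m" where
  "adj A = (\<chi> i j. cnj (A $ j $ i))"

definition outer :: "complex^'n \<Rightarrow> complex^'m \<Rightarrow> complex^'m^'n" where
  "outer u v = (\<chi> i j. u $ i * cnj (v $ j))"

definition unitary_mat :: "complex^'n^'n \<Rightarrow> bool" where
  "unitary_mat U \<longleftrightarrow> adj U ** U = mat 1 \<and> U ** adj U = mat 1"

definition psd :: "complex^'n::finite^'n \<Rightarrow> bool" where
  "psd A \<longleftrightarrow> adj A = A \<and> (\<forall>v. 0 \<le> Re (cinner v (A *v v)))"

definition trace_norm :: "complex^'n::finite^'n \<Rightarrow> real" where
  "trace_norm X = Re (trace (THE S. psd S \<and> S ** S = adj X ** X))"

definition ptrace12 :: "complex^('a::finite \<times> 'b::finite \<times> 'e::finite)^('a \<times> 'b \<times> 'e) \<Rightarrow> complex^'e^'e" where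
  "ptrace12 \<rho> = (\<chi> x x'. \<Sum>a\<in>UNIV. \<Sum>b\<in>UNIV. \<rho> $ (a, b, x) $ (a, b, x'))"

definition cqA1E :: "complex^('a::finite \<times> 'b::finite \<times> 'e::finite)^('a \<times> 'b \<times> 'e) \<Rightarrow> complex^('a \<times> 'e)^('a \<times> 'e)" where
  "cqA1E \<rho> = (\<Sum>a\<in>UNIV. kron (outer (ket a) (ket a))
        (ptrace12 (kron (outer (ket a) (ket a)) (mat 1 :: complex^('b \<times> 'e)^('b \<times> 'e)) ** \<rho>)))"

end

theory Submission
  imports Defs
begin

lemma cinner_add_right: "cinner u (v + w) = cinner u v + cinner u w"
  by (simp add: cinner_def sum.distrib algebra_simps)
lemma cinner_add_left: "cinner (u + v) w = cinner u w + cinner v w"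
  by (simp add: cinner_def sum.distrib algebra_simps)
lemma cinner_diff_right: "cinner u (v - w) = cinner u v - cinner u w"
  by (simp add: cinner_def sum_subtractf algebra_simps)
lemma cinner_diff_left: "cinner (u - v) w = cinner u w - cinner v w"
  by (simp add: cinner_def sum_subtractf algebra_simps)
lemma cinner_scale_right: "cinner u (c *s v) = c * cinner u v"
  by (simp add: cinner_def sum_distrib_left algebra_simps)
lemma cinner_scale_left: "cinner (c *s u) v = cnj c * cinner u v"
  by (simp add: cinner_def sum_distrib_left algebra_simps)
lemma cinner_zero_right[simp]: "cinner u 0 = 0" by (simp add: cinner_def)
lemma cinner_zero_left[simp]: "cinner 0 u = 0" by (simp add: cinner_def)
lemma cinner_cnj: "cnj (cinner u v) = cinner v u"
  by (simp add: cinner_def mult.commute)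
lemma cinner_sum_right: "cinner u (sum f A) = (\<Sum>a\<in>A. cinner u (f a))"
  by (induction A rule: infinite_finite_induct) (auto simp: cinner_add_right)
lemma cinner_sum_left: "cinner (sum f A) u = (\<Sum>a\<in>A. cinner (f a) u)"
  by (induction A rule: infinite_finite_induct) (auto simp: cinner_add_left)

lemma cinner_adj: "cinner u (A *v v) = cinner (adj A *v u) v"
proof -
  have "cinner u (A *v v) = (\<Sum>i\<in>UNIV. \<Sum>j\<in>UNIV. cnj (u$i) * A$i$j * v$j)"
    by (simp add: cinner_def matrix_vector_mult_def sum_distrib_left mult.assoc)
  also have "\<dots> = (\<Sum>j\<in>UNIV. \<Sum>i\<in>UNIV. cnj (u$i) * A$i$j * v$j)"
    by (rule sum.swap)
  also have "\<dots> = cinner (adj A *v u) v"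
    by (simp add: cinner_def matrix_vector_mult_def adj_def sum_distrib_left mult_ac)
  finally show ?thesis .
qed

lemma outer_mv: "outer u v *v w = cinner v w *s u"
  by (simp add: outer_def matrix_vector_mult_def cinner_def vec_eq_iff sum_distrib_left mult.commute mult.left_commute)

lemma adj_adj[simp]: "adj (adj A) = A" by (simp add: adj_def vec_eq_iff)
lemma adj_add: "adj (A + B) = adj A + adj B" by (simp add: adj_def vec_eq_iff)
lemma adj_diff: "adj (A - B) = adj A - adj B" by (simp add: adj_def vec_eq_iff)
lemma adj_scale: "adj (c *\<^sub>R A) = c *\<^sub>R adj A" by (simp add: adj_def vec_eq_iff)
lemma adj_outer: "adj (outer u v) = outer v u" by (simp add: adj_def outer_def vec_eq_iff)
lemma adj_sum: "adj (sum f A) = (\<Sum>a\<in>A. adj (f a))"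
  by (induction A rule: infinite_finite_induct) (auto simp: adj_add adj_def vec_eq_iff)
lemma adj_mult: "adj (A ** B) = adj B ** adj A"
  by (simp add: adj_def matrix_matrix_mult_def vec_eq_iff mult.commute)
lemma adj_zero[simp]: "adj 0 = 0" by (simp add: adj_def vec_eq_iff)

lemma sum_mv: "sum f A *v (x :: complex^'n) = (\<Sum>a\<in>A. f a *v x)"
  by (induction A rule: infinite_finite_induct) (simp_all add: matrix_vector_mult_add_rdistrib)
lemma cscaleR: "(r::real) *\<^sub>R (z::complex) = complex_of_real r * z"
  by (simp add: scaleR_conv_of_real)
lemma scaleR_mv: "(c *\<^sub>R (A :: complex^'n^'m)) *v x = c *\<^sub>R (A *v x)"
  unfolding vec_eq_iff matrix_vector_mult_def vector_scaleR_component by (simp add: scaleR_sum_right)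
lemma scaleR_cs: "c *\<^sub>R (x :: complex^'n) = complex_of_real c *s x"
  by (simp only: vec_eq_iff vector_scaleR_component vector_smult_component cscaleR) simp
lemma cinner_scaleR_right: fixes c :: real and u v :: "complex^'n" shows "cinner u (c *\<^sub>R v) = complex_of_real c * cinner u v"
  unfolding cinner_def sum_distrib_left vector_scaleR_component cscaleR by (simp add: mult.left_commute)
lemma cinner_scaleR_left: fixes c :: real and u v :: "complex^'n" shows "cinner (c *\<^sub>R u) v = complex_of_real c * cinner u v"
  unfolding cinner_def sum_distrib_left vector_scaleR_component cscaleR by (simp add: mult.assoc)
lemma diff_mv: "(A - B :: complex^'n^'m) *v x = A *v x - B *v x"
  by (rule matrix_vector_mult_diff_rdistrib)
lemma mv_diff: "(A :: complex^'n^'m) *v (x - y) = A *v x - A *v y"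
  by (rule matrix_vector_mult_diff_distrib)
lemma mv_add: "(A :: complex^'n^'m) *v (x + y) = A *v x + A *v y"
  by (simp add: matrix_vector_right_distrib)
lemma mv_sum: "(A :: complex^'n^'m) *v sum f S = (\<Sum>a\<in>S. A *v f a)"
  by (induction S rule: infinite_finite_induct) (simp_all add: mv_add)

lemma cnj_mult_self: "cnj (z::complex) * z = complex_of_real ((cmod z)^2)"
  using complex_norm_square[of z] by (simp add: mult.commute)

lemma cinner_self_real: "cinner u u = complex_of_real ((norm u)^2)"
proof -
  have n: "(\<Sum>i\<in>UNIV. (cmod (u$i))^2) = (norm u)^2"
    unfolding norm_vec_def L2_set_def by (rule real_sqrt_pow2[symmetric]) (simp add: sum_nonneg)
  have "cinner u u = (\<Sum>i\<in>UNIV. complex_of_real ((cmod (u$i))^2))"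
    unfolding cinner_def by (rule sum.cong[OF refl], rule cnj_mult_self)
  also have "\<dots> = complex_of_real (\<Sum>i\<in>UNIV. (cmod (u$i))^2)" by (rule of_real_sum[symmetric])
  finally show ?thesis by (simp only: n)
qed

lemma cinner_self_zero: "cinner u u = 0 \<longleftrightarrow> u = 0"
  by (simp add: cinner_self_real)

lemma hermitian_form_real:
  assumes "adj A = A" shows "cinner u (A *v u) = complex_of_real (Re (cinner u (A *v u)))"
proof -
  have "cnj (cinner u (A *v u)) = cinner (A *v u) u" by (rule cinner_cnj)
  also have "\<dots> = cinner (adj A *v u) u" using assms by simp
  also have "\<dots> = cinner u (A *v u)" by (rule cinner_adj[symmetric])
  finally have h: "cnj (cinner u (A *v u)) = cinner u (A *v u)" .
  have "Im (cinner u (A *v u)) = 0" using arg_cong[OF h, of Im] by simp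
  thus ?thesis by (intro complex_eqI) simp_all
qed

lemma mv_scaleR: "(A :: complex^'n^'m) *v (c *\<^sub>R x) = c *\<^sub>R (A *v x)"
  by (simp add: scaleR_cs vector_scalar_commute)

lemma mv_neg: "(A :: complex^'n^'m) *v (- x) = - (A *v x)"
  using mv_diff[of A 0 x] by simp

definition herm :: "complex^'n^'n \<Rightarrow> bool" where "herm A \<longleftrightarrow> adj A = A"

lemma psd0:
  fixes M :: "complex^'n^'n"
  assumes h: "adj M = M" and pos: "\<And>u. 0 \<le> Re (cinner u (M *v u))"
    and z: "Re (cinner v (M *v v)) = 0"
  shows "M *v v = 0"
proof (rule ccontr)
  assume nz: "M *v v \<noteq> 0"
  define w where "w = M *v v"
  define a where "a = (norm w)^2"
  have a: "a > 0" using nz by (simp add: a_def w_def)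
  define c where "c = Re (cinner w (M *v w))"
  have c: "c \<ge> 0" using pos by (simp add: c_def)
  define t where "t = a / (c + 1)"
  have t: "t > 0" using a c by (simp add: t_def)
  have e1: "cinner w w = complex_of_real a" by (simp add: a_def cinner_self_real)
  have e2: "cinner v (M *v w) = complex_of_real a"
    unfolding cinner_adj[of v M w] h w_def[symmetric] by (rule e1)
  have e3: "cinner w (M *v v) = complex_of_real a" using e1 by (simp add: w_def)
  have "Re (cinner (v - t *\<^sub>R w) (M *v (v - t *\<^sub>R w))) = Re (cinner v (M *v v)) - 2 * t * a + t^2 * c"
    by (simp add: mv_diff mv_scaleR cinner_diff_left cinner_diff_right cinner_scaleR_left
        cinner_scaleR_right e2 e3 c_def power2_eq_square algebra_simps)
  also have "\<dots> = - 2 * t * a + t^2 * c" using z by simp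
  also have "\<dots> < 0"
  proof -
    have "t * c < a" using a c by (simp add: t_def field_simps)
    hence "t * (t * c) < t * a" using t by simp
    thus ?thesis using t a by (simp add: power2_eq_square algebra_simps)
  qed
  finally show False using pos[of "v - t *\<^sub>R w"] by simp
qed

definition qf :: "complex^'n^'n \<Rightarrow> complex^'n \<Rightarrow> real" where
  "qf X v = Re (cinner v (X *v v))"

lemma qf_scale: "qf X (c *\<^sub>R u) = c^2 * qf X u"
  by (simp add: qf_def mv_scaleR cinner_scaleR_left cinner_scaleR_right power2_eq_square)

lemma qf_cont: "continuous_on S (qf X)"
  unfolding qf_def cinner_def matrix_vector_mult_def
  by (intro continuous_intros)

lemma qf_le_norm:
  assumes "\<And>y. norm y = 1 \<Longrightarrow> qf X y \<le> d"
  shows "qf X u \<le> d * (norm u)^2"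
proof (cases "u = 0")
  case True thus ?thesis by (simp add: qf_def)
next
  case False
  define y where "y = (1 / norm u) *\<^sub>R u"
  have "norm y = 1" using False by (simp add: y_def)
  hence "qf X y \<le> d" by (rule assms)
  moreover have "u = norm u *\<^sub>R y" using False by (simp add: y_def)
  hence "qf X u = (norm u)^2 * qf X y" by (metis qf_scale)
  ultimately show ?thesis by (simp add: mult_right_mono mult.commute)
qed

lemma eigen_pos:
  fixes X :: "complex^'n^'n"
  assumes h: "adj X = X" and u: "qf X u > 0"
  shows "\<exists>v d. cinner v v = 1 \<and> d > 0 \<and> X *v v = d *\<^sub>R v"
proof -
  have ne: "sphere (0::complex^'n) 1 \<noteq> {}" by (simp add: sphere_eq_empty)
  have "\<exists>x\<in>sphere (0::complex^'n) 1. \<forall>y\<in>sphere 0 1. qf X y \<le> qf X x"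
    by (rule continuous_attains_sup[OF compact_sphere ne qf_cont])
  then obtain v where v0: "v \<in> sphere (0::complex^'n) 1" and mx0: "\<forall>y\<in>sphere 0 1. qf X y \<le> qf X v"
    by blast
  have v: "norm v = 1" using v0 by simp
  have mx: "\<And>y. norm y = 1 \<Longrightarrow> qf X y \<le> qf X v" using mx0 by simp
  define d where "d = qf X v"
  have le: "\<And>y. qf X y \<le> d * (norm y)^2"
    by (rule qf_le_norm) (simp add: mx d_def)
  have "d > 0"
  proof -
    have "0 < qf X u" by (rule u)
    also have "\<dots> \<le> d * (norm u)^2" by (rule le)
    finally show ?thesis by (simp add: zero_less_mult_iff)
  qed
  define M where "M = d *\<^sub>R mat 1 - X"
  have Mv: "\<And>y. M *v y = d *\<^sub>R y - X *v y"
    by (simp add: M_def diff_mv scaleR_mv)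
  have hM: "adj M = M" by (simp add: M_def adj_diff adj_scale h, simp add: adj_def mat_def vec_eq_iff)
  have pos: "\<And>y. 0 \<le> Re (cinner y (M *v y))"
  proof -
    fix y :: "complex^'n"
    have "Re (cinner y (M *v y)) = d * (norm y)^2 - qf X y"
      by (simp add: Mv cinner_diff_right cinner_scaleR_right cinner_self_real qf_def)
    thus "0 \<le> Re (cinner y (M *v y))" using le[of y] by simp
  qed
  have z: "Re (cinner v (M *v v)) = 0"
    by (simp add: Mv cinner_diff_right cinner_scaleR_right cinner_self_real v d_def qf_def)
  have "M *v v = 0" by (rule psd0[OF hM pos z])
  hence "X *v v = d *\<^sub>R v" by (simp add: Mv)
  moreover have "cinner v v = 1" by (simp add: cinner_self_real v)
  ultimately show ?thesis using \<open>d > 0\<close> by (intro exI[of _ v] exI[of _ d] conjI)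
qed

lemma neg_mv: "(- (X::complex^'n^'m)) *v u = - (X *v u)"
  unfolding matrix_vector_mult_def vec_eq_iff by (simp add: sum_negf)

lemma eigen_nz:
  fixes X :: "complex^'n^'n"
  assumes h: "adj X = X" and nz: "X \<noteq> 0"
  shows "\<exists>v d. cinner v v = 1 \<and> d \<noteq> 0 \<and> X *v v = d *\<^sub>R v"
proof (cases "\<exists>u. qf X u > 0")
  case True
  then obtain u where "qf X u > 0" by blast
  from eigen_pos[OF h this] obtain v d where "cinner v v = 1" "d > 0" "X *v v = d *\<^sub>R v"
    by blast
  thus ?thesis by (intro exI[of _ v] exI[of _ d] conjI) simp_all
next
  case F1: False
  show ?thesis
  proof (cases "\<exists>u. qf (- X) u > 0")
    case True
    then obtain u where u: "qf (- X) u > 0" by blast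
    have h2: "adj (- X) = - X" using h by (simp add: adj_def vec_eq_iff)
    from eigen_pos[OF h2 u] obtain v d where vd: "cinner v v = 1" "d > 0" "(- X) *v v = d *\<^sub>R v"
      by blast
    have "X *v v = - ((- X) *v v)" by (simp add: neg_mv)
    also have "\<dots> = (- d) *\<^sub>R v" by (simp add: vd(3))
    finally have "X *v v = (- d) *\<^sub>R v" .
    thus ?thesis using vd by (intro exI[of _ v] exI[of _ "-d"] conjI) simp_all
  next
    case False
    have q0: "\<And>u. qf X u = 0"
    proof -
      fix u
      have "qf X u \<le> 0" using F1 by (simp add: not_less)
      moreover have "qf (- X) u \<le> 0" using False by (simp add: not_less)
      hence "qf X u \<ge> 0" by (simp add: qf_def neg_mv cinner_def sum_negf)
      ultimately show "qf X u = 0" by simp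
    qed
    have "\<And>u. X *v u = 0"
      by (rule psd0[OF h]) (use q0 in \<open>simp_all add: qf_def\<close>)
    hence "X = 0" by (simp add: matrix_eq)
    with nz show ?thesis by simp
  qed
qed

definition orthonormal :: "(complex^'n) set \<Rightarrow> bool" where
  "orthonormal F \<longleftrightarrow> (\<forall>w\<in>F. cinner w w = 1) \<and> (\<forall>w\<in>F. \<forall>u\<in>F. w \<noteq> u \<longrightarrow> cinner w u = 0)"

lemma inner_cinner: "(x::complex^'n) \<bullet> y = Re (cinner x y)"
  by (simp add: inner_vec_def cinner_def inner_complex_def Re_sum)

lemma orthonormal_card:
  assumes "orthonormal (W :: (complex^'n) set)"
  shows "card W \<le> DIM(complex^'n)"
proof -
  have "pairwise orthogonal W"
    using assms by (auto simp: pairwise_def orthogonal_def inner_cinner orthonormal_def)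
  moreover have "0 \<notin> W" using assms by (auto simp: orthonormal_def)
  ultimately have "independent W" by (rule pairwise_orthogonal_independent)
  thus ?thesis using independent_bound by blast
qed

lemma orthonormal_finite:
  assumes "orthonormal (W :: (complex^'n) set)" shows "finite W"
proof -
  have "pairwise orthogonal W"
    using assms by (auto simp: pairwise_def orthogonal_def inner_cinner orthonormal_def)
  moreover have "0 \<notin> W" using assms by (auto simp: orthonormal_def)
  ultimately have "independent W" by (rule pairwise_orthogonal_independent)
  thus ?thesis using independent_bound by blast
qed

lemma dec_apply:
  "(\<Sum>w\<in>F. lam w *\<^sub>R outer w w) *v x = (\<Sum>w\<in>F. (complex_of_real (lam w) * cinner w x) *s w)"
  by (simp add: sum_mv scaleR_mv outer_mv scaleR_cs vector_smult_assoc)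

lemma on_cinner: "orthonormal F \<Longrightarrow> u \<in> F \<Longrightarrow> w \<in> F \<Longrightarrow> cinner u w = (if u = w then 1 else 0)"
  by (auto simp: orthonormal_def)

lemma dec_eig:
  assumes "orthonormal F" "finite F" "w \<in> F"
  shows "(\<Sum>u\<in>F. lam u *\<^sub>R outer u u) *v w = lam w *\<^sub>R w"
proof -
  have "(\<Sum>u\<in>F. lam u *\<^sub>R outer u u) *v w = (\<Sum>u\<in>F. (if u = w then lam w *\<^sub>R w else 0))"
    unfolding dec_apply
    by (rule sum.cong[OF refl]) (simp add: on_cinner[OF assms(1) _ assms(3)] scaleR_cs)
  also have "\<dots> = lam w *\<^sub>R w" using assms(2,3) by simp
  finally show ?thesis .
qed

lemma adj_mat1: "adj (mat 1 :: complex^'n^'n) = mat 1"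
  by (simp add: adj_def mat_def vec_eq_iff)

lemma spectral_aux:
  "\<forall>(X::complex^'n^'n) W. adj X = X \<longrightarrow> orthonormal W \<longrightarrow> (\<forall>w\<in>W. X *v w = 0)
     \<longrightarrow> DIM(complex^'n) - card W = m \<longrightarrow>
     (\<exists>F lam. finite F \<and> orthonormal F \<and> (\<forall>w\<in>F. lam w \<noteq> (0::real)) \<and> X = (\<Sum>w\<in>F. lam w *\<^sub>R outer w w))"
proof (induction m rule: less_induct)
  case (less m)
  show ?case
  proof (intro allI impI)
    fix X :: "complex^'n^'n" and W
    assume h: "adj X = X" and oW: "orthonormal W" and kW: "\<forall>w\<in>W. X *v w = 0"
      and m: "DIM(complex^'n) - card W = m"
    show "\<exists>F lam. finite F \<and> orthonormal F \<and> (\<forall>w\<in>F. lam w \<noteq> (0::real)) \<and> X = (\<Sum>w\<in>F. lam w *\<^sub>R outer w w)"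
    proof (cases "X = 0")
      case True
      thus ?thesis by (intro exI[of _ "{}"]) (simp add: orthonormal_def)
    next
      case False
      from eigen_nz[OF h False] obtain v d where v1: "cinner v v = 1" and d: "d \<noteq> 0"
        and Xv: "X *v v = d *\<^sub>R v" by blast
      have ovW: "cinner w v = 0" if "w \<in> W" for w
      proof -
        have "complex_of_real d * cinner w v = cinner w (X *v v)" by (simp add: Xv cinner_scaleR_right)
        also have "\<dots> = cinner (X *v w) v" by (simp only: cinner_adj[of w X v] h)
        also have "\<dots> = 0" using kW that by simp
        finally show ?thesis using d by simp
      qed
      have ovW2: "cinner v w = 0" if "w \<in> W" for w
        using ovW[OF that] cinner_cnj[of w v] by simp
      have vW: "v \<notin> W" using ovW v1 by force
      define X' where "X' = X - d *\<^sub>R outer v v"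
      have X'app: "X' *v y = X *v y - (complex_of_real d * cinner v y) *s v" for y
        by (simp add: X'_def diff_mv scaleR_mv outer_mv scaleR_cs vector_smult_assoc)
      have hX': "adj X' = X'" by (simp add: X'_def adj_diff adj_scale adj_outer h)
      have oW': "orthonormal (insert v W)"
        using oW v1 ovW ovW2 by (auto simp: orthonormal_def)
      have kW': "\<forall>w\<in>insert v W. X' *v w = 0"
        using kW ovW2 by (auto simp: X'app Xv v1 scaleR_cs)
      have fW: "finite W" by (rule orthonormal_finite[OF oW])
      have "card (insert v W) \<le> DIM(complex^'n)" by (rule orthonormal_card[OF oW'])
      hence lt: "DIM(complex^'n) - card (insert v W) < m" using m fW vW by simp
      have IH: "\<exists>F lam. finite F \<and> orthonormal F \<and> (\<forall>w\<in>F. lam w \<noteq> (0::real)) \<and> X' = (\<Sum>w\<in>F. lam w *\<^sub>R outer w w)"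
        using less[OF lt, THEN spec[of _ X'], THEN spec[of _ "insert v W"]] hX' oW' kW' by blast
      from IH obtain F lam where fF: "finite F" and oF: "orthonormal F" and lnz: "\<forall>w\<in>F. lam w \<noteq> 0"
        and X'F: "X' = (\<Sum>w\<in>F. lam w *\<^sub>R outer w w)" by blast
      have ovF: "cinner v u = 0" if "u \<in> F" for u
      proof -
        have "X' *v u = lam u *\<^sub>R u" unfolding X'F by (rule dec_eig[OF oF fF that])
        hence "complex_of_real (lam u) * cinner v u = cinner v (X' *v u)" by (simp add: cinner_scaleR_right)
        also have "\<dots> = cinner (X' *v v) u" by (simp only: cinner_adj[of v X' u] hX')
        also have "\<dots> = 0" using kW' by simp
        finally show ?thesis using lnz that by simp
      qed
      have vF: "v \<notin> F" using ovF v1 by force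
      have ovF2: "cinner u v = 0" if "u \<in> F" for u
        using ovF[OF that] cinner_cnj[of v u] by simp
      define lam' where "lam' = lam(v := d)"
      have "X = X' + d *\<^sub>R outer v v" by (simp add: X'_def)
      also have "\<dots> = (\<Sum>w\<in>F. lam' w *\<^sub>R outer w w) + lam' v *\<^sub>R outer v v"
        unfolding X'F lam'_def using vF by (auto intro!: sum.cong)
      also have "\<dots> = (\<Sum>w\<in>insert v F. lam' w *\<^sub>R outer w w)"
        using fF vF by (simp add: add.commute)
      finally have XF: "X = (\<Sum>w\<in>insert v F. lam' w *\<^sub>R outer w w)" .
      have "orthonormal (insert v F)" using oF v1 ovF ovF2 by (auto simp: orthonormal_def)
      moreover have "\<forall>w\<in>insert v F. lam' w \<noteq> 0" using lnz d vF by (auto simp: lam'_def)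
      ultimately show ?thesis using XF fF
        by (intro exI[of _ "insert v F"] exI[of _ lam'] conjI) simp_all
    qed
  qed
qed

lemma spectral:
  fixes X :: "complex^'n^'n"
  assumes "adj X = X"
  shows "\<exists>F lam. finite F \<and> orthonormal F \<and> (\<forall>w\<in>F. lam w \<noteq> (0::real)) \<and> X = (\<Sum>w\<in>F. lam w *\<^sub>R outer w w)"
  using spectral_aux[rule_format, OF assms, of "{}"] by (simp add: orthonormal_def)

definition dec :: "(complex^'n) set \<Rightarrow> (complex^'n \<Rightarrow> real) \<Rightarrow> complex^'n^'n" where
  "dec F c = (\<Sum>w\<in>F. c w *\<^sub>R outer w w)"

lemma dec_app: "dec F c *v x = (\<Sum>w\<in>F. (complex_of_real (c w) * cinner w x) *s w)"
  unfolding dec_def by (rule dec_apply)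

lemma dec_eig2: "orthonormal F \<Longrightarrow> finite F \<Longrightarrow> w \<in> F \<Longrightarrow> dec F c *v w = c w *\<^sub>R w"
  unfolding dec_def by (rule dec_eig)

lemma dec_adj: "adj (dec F c) = dec F c"
  by (simp add: dec_def adj_sum adj_scale adj_outer)

lemma dec_mult:
  assumes o: "orthonormal F" and f: "finite F"
  shows "dec F a ** dec F b = dec F (\<lambda>w. a w * b w)"
proof -
  have "(dec F a ** dec F b) *v x = dec F (\<lambda>w. a w * b w) *v x" for x
  proof -
    have "(dec F a ** dec F b) *v x = dec F a *v (dec F b *v x)"
      by (simp add: matrix_vector_mul_assoc)
    also have "\<dots> = (\<Sum>w\<in>F. (complex_of_real (b w) * cinner w x) *s (dec F a *v w))"
      by (simp add: dec_app mv_sum vector_scalar_commute)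
    also have "\<dots> = (\<Sum>w\<in>F. (complex_of_real (b w) * cinner w x) *s (a w *\<^sub>R w))"
      by (rule sum.cong[OF refl]) (simp add: dec_eig2[OF o f])
    also have "\<dots> = dec F (\<lambda>w. a w * b w) *v x"
      by (simp add: dec_app scaleR_cs vector_smult_assoc mult_ac)
    finally show ?thesis .
  qed
  thus ?thesis by (simp add: matrix_eq)
qed

lemma dec_form: "Re (cinner u (dec F c *v u)) = (\<Sum>w\<in>F. c w * (cmod (cinner w u))^2)"
proof -
  have "cinner u (dec F c *v u) = (\<Sum>w\<in>F. complex_of_real (c w) * (cinner w u * cinner u w))"
    by (simp add: dec_app cinner_sum_right cinner_scale_right mult_ac)
  also have "\<dots> = (\<Sum>w\<in>F. complex_of_real (c w * (cmod (cinner w u))^2))"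
  proof (rule sum.cong[OF refl])
    fix w
    have "cinner w u * cinner u w = cinner w u * cnj (cinner w u)" by (simp add: cinner_cnj)
    also have "\<dots> = complex_of_real ((cmod (cinner w u))^2)" by (rule complex_norm_square[symmetric])
    finally have "cinner w u * cinner u w = complex_of_real ((cmod (cinner w u))^2)" .
    thus "complex_of_real (c w) * (cinner w u * cinner u w) = complex_of_real (c w * (cmod (cinner w u))^2)"
      by simp
  qed
  finally show ?thesis by (simp only: Re_sum Re_complex_of_real)
qed

definition psdm :: "complex^'n^'n \<Rightarrow> bool" where
  "psdm A \<longleftrightarrow> adj A = A \<and> (\<forall>v. 0 \<le> Re (cinner v (A *v v)))"

lemma psd_sqrt_unique:
  fixes S T :: "complex^'n^'n"
  assumes S: "psdm S" and T: "psdm T" and eq: "S ** S = T ** T"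
  shows "S = T"
proof (rule ccontr)
  assume ne: "S \<noteq> T"
  define E where "E = S - T"
  have hS: "adj S = S" and pS: "\<And>v. 0 \<le> Re (cinner v (S *v v))" using S by (auto simp: psdm_def)
  have hT: "adj T = T" and pT: "\<And>v. 0 \<le> Re (cinner v (T *v v))" using T by (auto simp: psdm_def)
  have hE: "adj E = E" by (simp add: E_def adj_diff hS hT)
  have "E \<noteq> 0" using ne by (simp add: E_def)
  from eigen_nz[OF hE this] obtain v d where v1: "cinner v v = 1" and d: "d \<noteq> 0"
    and Ev: "E *v v = d *\<^sub>R v" by blast
  have Eapp: "E *v y = S *v y - T *v y" for y by (simp add: E_def diff_mv)
  have key: "S *v (E *v v) + E *v (T *v v) = 0"
  proof -
    have "S *v (S *v v) = T *v (T *v v)" by (simp add: matrix_vector_mul_assoc eq)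
    thus ?thesis by (simp add: Eapp mv_diff)
  qed
  have "cinner v (S *v (E *v v)) = complex_of_real d * cinner v (S *v v)"
    by (simp add: Ev mv_scaleR cinner_scaleR_right)
  moreover have "cinner v (E *v (T *v v)) = complex_of_real d * cinner v (T *v v)"
  proof -
    have "cinner v (E *v (T *v v)) = cinner (E *v v) (T *v v)" by (simp only: cinner_adj[of v E] hE)
    also have "\<dots> = complex_of_real d * cinner v (T *v v)" by (simp add: Ev cinner_scaleR_left)
    finally show ?thesis .
  qed
  ultimately have "complex_of_real d * (cinner v (S *v v) + cinner v (T *v v)) = 0"
    using arg_cong[OF key, of "cinner v"] by (simp add: cinner_add_right distrib_left)
  hence "cinner v (S *v v) + cinner v (T *v v) = 0" using d by simp
  hence "Re (cinner v (S *v v)) + Re (cinner v (T *v v)) = 0" by (metis plus_complex.sel(1) zero_complex.sel(1))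
  hence z1: "Re (cinner v (S *v v)) = 0" and z2: "Re (cinner v (T *v v)) = 0"
    using pS[of v] pT[of v] by linarith+
  have "S *v v = 0" by (rule psd0[OF hS pS z1])
  moreover have "T *v v = 0" by (rule psd0[OF hT pT z2])
  ultimately have "E *v v = 0" by (simp add: Eapp)
  hence "d *\<^sub>R v = 0" using Ev by simp
  hence "v = 0" using d by simp
  thus False using v1 by simp
qed

lemma trace_dec: "trace (dec F c) = (\<Sum>w\<in>F. complex_of_real (c w) * cinner w w)"
proof -
  have "trace (dec F c) = (\<Sum>i\<in>UNIV. \<Sum>w\<in>F. complex_of_real (c w) * (w$i * cnj (w$i)))"
    by (simp add: trace_def dec_def outer_def cscaleR)
  also have "\<dots> = (\<Sum>w\<in>F. \<Sum>i\<in>UNIV. complex_of_real (c w) * (w$i * cnj (w$i)))"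
    by (rule sum.swap)
  also have "\<dots> = (\<Sum>w\<in>F. complex_of_real (c w) * cinner w w)"
    by (simp add: cinner_def sum_distrib_left mult_ac)
  finally show ?thesis .
qed

lemma trace_norm_dec:
  fixes D :: "complex^'n^'n"
  assumes o: "orthonormal F" and f: "finite F" and D: "D = dec F lam"
  shows "trace_norm D = (\<Sum>w\<in>F. \<bar>lam w\<bar>)"
proof -
  define S where "S = dec F (\<lambda>w. \<bar>lam w\<bar>)"
  have pS: "psd S" unfolding psd_def S_def
    by (simp add: dec_adj dec_form sum_nonneg)
  have SS: "S ** S = adj D ** D"
    unfolding S_def D dec_adj dec_mult[OF o f] by (simp add: abs_mult_self_eq)
  have "(THE S. psd S \<and> S ** S = adj D ** D) = S"
  proof (rule the_equality)
    show "psd S \<and> S ** S = adj D ** D" using pS SS by simp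
    fix T assume "psd T \<and> T ** T = adj D ** D"
    thus "T = S" using psd_sqrt_unique[of T S] pS SS by (simp add: psd_def psdm_def)
  qed
  hence "trace_norm D = Re (trace S)" by (simp add: trace_norm_def)
  also have "\<dots> = (\<Sum>w\<in>F. \<bar>lam w\<bar>)"
    unfolding S_def trace_dec using o
    by (simp add: Re_sum orthonormal_def)
  finally show ?thesis .
qed

lemma bessel:
  assumes o: "orthonormal F" and f: "finite F"
  shows "(\<Sum>w\<in>F. (cmod (cinner w u))^2) \<le> (norm u)^2"
proof -
  define P where "P = dec F (\<lambda>_. 1)"
  have PP: "P ** P = P" unfolding P_def dec_mult[OF o f] by simp
  have hP: "adj P = P" unfolding P_def by (rule dec_adj)
  define p where "p = P *v u"
  have pp: "cinner p p = cinner u p"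
  proof -
    have "cinner p p = cinner (adj P *v u) (P *v u)" by (simp add: p_def hP)
    also have "\<dots> = cinner u (P *v (P *v u))" by (rule cinner_adj[symmetric])
    also have "\<dots> = cinner u p" by (simp add: matrix_vector_mul_assoc PP p_def)
    finally show ?thesis .
  qed
  have pu: "Re (cinner p u) = Re (cinner u p)"
    using arg_cong[OF cinner_cnj[of u p], of Re] by simp
  have "0 \<le> (norm (u - p))^2" by simp
  also have "(norm (u - p))^2 = Re (cinner (u - p) (u - p))" by (simp add: cinner_self_real)
  also have "\<dots> = Re (cinner u u) - Re (cinner u p)"
    by (simp add: cinner_diff_left cinner_diff_right pp pu)
  also have "\<dots> = (norm u)^2 - (\<Sum>w\<in>F. (cmod (cinner w u))^2)"
    by (simp add: cinner_self_real p_def P_def dec_form)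
  finally show ?thesis by simp
qed

lemma L2_bessel:
  assumes o: "orthonormal F" and f: "finite F"
  shows "L2_set (\<lambda>w. cmod (cinner w u)) F \<le> norm u"
proof -
  have "L2_set (\<lambda>w. cmod (cinner w u)) F = sqrt (\<Sum>w\<in>F. (cmod (cinner w u))^2)"
    by (simp add: L2_set_def)
  also have "\<dots> \<le> sqrt ((norm u)^2)" by (rule real_sqrt_le_mono[OF bessel[OF o f]])
  also have "\<dots> = norm u" by simp
  finally show ?thesis .
qed

definition symop :: "'k set \<Rightarrow> ('k \<Rightarrow> complex^'n) \<Rightarrow> ('k \<Rightarrow> complex^'n) \<Rightarrow> complex^'n^'n" where
  "symop K a b = (\<Sum>k\<in>K. outer (a k) (b k) + outer (b k) (a k))"

lemma symop_adj: "adj (symop K a b) = symop K a b"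
  by (simp add: symop_def adj_sum adj_add adj_outer add.commute)

lemma symop_form: "cinner w (symop K a b *v w) =
   (\<Sum>k\<in>K. cinner w (a k) * cinner (b k) w + cinner w (b k) * cinner (a k) w)"
  by (simp add: symop_def sum_mv matrix_vector_mult_add_rdistrib outer_mv cinner_sum_right
      cinner_add_right cinner_scale_right mult.commute)

lemma tn_bound:
  fixes a b :: "'k \<Rightarrow> complex^'n"
  assumes K: "finite K"
  shows "trace_norm (symop K a b) \<le> (\<Sum>k\<in>K. 2 * norm (a k) * norm (b k))"
proof -
  define D where "D = symop K a b"
  from spectral[OF symop_adj[of K a b]] obtain F lam where f: "finite F" and o: "orthonormal F"
    and Dd: "symop K a b = (\<Sum>w\<in>F. lam w *\<^sub>R outer w w)" by blast
  have Dd': "symop K a b = dec F lam" by (simp add: Dd dec_def)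
  define al where "al = (\<lambda>k w. cmod (cinner w (a k)))"
  define be where "be = (\<lambda>k w. cmod (cinner w (b k)))"
  have lw: "\<bar>lam w\<bar> \<le> (\<Sum>k\<in>K. 2 * (al k w * be k w))" if w: "w \<in> F" for w
  proof -
    have "symop K a b *v w = lam w *\<^sub>R w" unfolding Dd' by (rule dec_eig2[OF o f w])
    hence "cinner w (symop K a b *v w) = complex_of_real (lam w)"
      using o w by (simp add: cinner_scaleR_right orthonormal_def)
    hence "\<bar>lam w\<bar> = cmod (\<Sum>k\<in>K. cinner w (a k) * cinner (b k) w + cinner w (b k) * cinner (a k) w)"
      by (simp add: symop_form[symmetric])
    also have "\<dots> \<le> (\<Sum>k\<in>K. cmod (cinner w (a k) * cinner (b k) w + cinner w (b k) * cinner (a k) w))"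
      by (rule norm_sum)
    also have "\<dots> \<le> (\<Sum>k\<in>K. 2 * (al k w * be k w))"
    proof (rule sum_mono)
      fix k
      have c1: "cmod (cinner (b k) w) = be k w" unfolding be_def
        by (metis cinner_cnj complex_mod_cnj)
      have c2: "cmod (cinner (a k) w) = al k w" unfolding al_def
        by (metis cinner_cnj complex_mod_cnj)
      have "cmod (cinner w (a k) * cinner (b k) w + cinner w (b k) * cinner (a k) w)
          \<le> cmod (cinner w (a k) * cinner (b k) w) + cmod (cinner w (b k) * cinner (a k) w)"
        by (rule norm_triangle_ineq)
      also have "\<dots> = 2 * (al k w * be k w)"
        by (simp add: norm_mult c1 c2 al_def be_def)
      finally show "cmod (cinner w (a k) * cinner (b k) w + cinner w (b k) * cinner (a k) w) \<le> 2 * (al k w * be k w)" .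
    qed
    finally show ?thesis .
  qed
  have "trace_norm (symop K a b) = (\<Sum>w\<in>F. \<bar>lam w\<bar>)" by (rule trace_norm_dec[OF o f Dd'])
  also have "\<dots> \<le> (\<Sum>w\<in>F. \<Sum>k\<in>K. 2 * (al k w * be k w))" by (rule sum_mono[OF lw])
  also have "\<dots> = (\<Sum>k\<in>K. 2 * (\<Sum>w\<in>F. \<bar>al k w\<bar> * \<bar>be k w\<bar>))"
    by (subst sum.swap) (simp add: sum_distrib_left al_def be_def)
  also have "\<dots> \<le> (\<Sum>k\<in>K. 2 * norm (a k) * norm (b k))"
  proof (rule sum_mono)
    fix k
    have "(\<Sum>w\<in>F. \<bar>al k w\<bar> * \<bar>be k w\<bar>) \<le> L2_set (al k) F * L2_set (be k) F"
      by (rule L2_set_mult_ineq)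
    also have "\<dots> \<le> norm (a k) * norm (b k)"
      unfolding al_def be_def
      by (rule mult_mono[OF L2_bessel[OF o f] L2_bessel[OF o f]]) (simp_all add: L2_set_nonneg)
    finally show "2 * (\<Sum>w\<in>F. \<bar>al k w\<bar> * \<bar>be k w\<bar>) \<le> 2 * norm (a k) * norm (b k)" by simp
  qed
  finally show ?thesis .
qed

lemma ket_nth: "ket a $ j = (if j = a then 1 else 0)" by (simp add: ket_def)

lemma kronP_mult:
  "(kron (outer (ket a) (ket a)) (mat 1 :: complex^('b::finite \<times> 'e::finite)^('b \<times> 'e)) ** \<rho>) $ r $ c
     = (if fst r = a then \<rho> $ r $ c else 0)"
proof -
  have k: "kron (outer (ket a) (ket a)) (mat 1 :: complex^('b::finite \<times> 'e::finite)^('b \<times> 'e)) $ r $ k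
      = (if k = r \<and> fst r = a then 1 else 0)" for k
    by (cases r, cases k) (auto simp: kron_def outer_def ket_nth mat_def)
  have "(kron (outer (ket a) (ket a)) (mat 1 :: complex^('b::finite \<times> 'e::finite)^('b \<times> 'e)) ** \<rho>) $ r $ c
      = (\<Sum>k\<in>UNIV. (if k = r \<and> fst r = a then 1 else 0) * \<rho> $ k $ c)"
    by (simp add: matrix_matrix_mult_def k)
  also have "\<dots> = (\<Sum>k\<in>UNIV. (if k = r then (if fst r = a then \<rho> $ k $ c else 0) else 0))"
    by (rule sum.cong) auto
  also have "\<dots> = (if fst r = a then \<rho> $ r $ c else 0)" by simp
  finally show ?thesis .
qed

lemma cq_entry:
  fixes \<rho> :: "complex^('a::finite \<times> 'b::finite \<times> 'e::finite)^('a \<times> 'b \<times> 'e)"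
  shows "cqA1E \<rho> $ (a1, i) $ (a2, j) = (if a1 = a2 then (\<Sum>b\<in>UNIV. \<rho> $ (a1, b, i) $ (a1, b, j)) else 0)"
proof -
  have pt: "ptrace12 (kron (outer (ket a) (ket a)) (mat 1 :: complex^('b::finite \<times> 'e::finite)^('b \<times> 'e)) ** \<rho>) $ i $ j
      = (\<Sum>b\<in>UNIV. \<rho> $ (a, b, i) $ (a, b, j))" for a
  proof -
    have "ptrace12 (kron (outer (ket a) (ket a)) (mat 1 :: complex^('b::finite \<times> 'e::finite)^('b \<times> 'e)) ** \<rho>) $ i $ j
       = (\<Sum>a'\<in>UNIV. \<Sum>b\<in>UNIV. if a' = a then \<rho> $ (a', b, i) $ (a', b, j) else 0)"
      unfolding ptrace12_def vec_lambda_beta kronP_mult fst_conv ..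
    also have "\<dots> = (\<Sum>a'\<in>UNIV. if a' = a then (\<Sum>b\<in>UNIV. \<rho> $ (a', b, i) $ (a', b, j)) else 0)"
      by (rule sum.cong[OF refl]) simp
    also have "\<dots> = (\<Sum>b\<in>UNIV. \<rho> $ (a, b, i) $ (a, b, j))" by simp
    finally show ?thesis .
  qed
  have ent: "kron (outer (ket a) (ket a)) M $ (a1, i) $ (a2, j) = (if a = a1 then (if a2 = a1 then M $ i $ j else 0) else 0)"
    for a and M :: "complex^'e^'e"
    by (simp add: kron_def outer_def ket_nth)
  have "cqA1E \<rho> $ (a1, i) $ (a2, j) = (\<Sum>a\<in>UNIV. if a = a1 then (if a2 = a1 then (\<Sum>b\<in>UNIV. \<rho> $ (a1, b, i) $ (a1, b, j)) else 0) else 0)"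
    unfolding cqA1E_def sum_component ent
    by (rule sum.cong[OF refl]) (simp add: pt)
  also have "\<dots> = (if a2 = a1 then (\<Sum>b\<in>UNIV. \<rho> $ (a1, b, i) $ (a1, b, j)) else 0)" by simp
  also have "\<dots> = (if a1 = a2 then (\<Sum>b\<in>UNIV. \<rho> $ (a1, b, i) $ (a1, b, j)) else 0)" by auto
  finally show ?thesis .
qed

lemma cq_add: "cqA1E (A + B) = cqA1E A + cqA1E B"
  by (simp add: vec_eq_iff cq_entry split_paired_All sum.distrib)
lemma cq_diff: "cqA1E (A - B) = cqA1E A - cqA1E B"
  by (simp add: vec_eq_iff cq_entry split_paired_All sum_subtractf)
lemma cq_scaleR: "cqA1E (c *\<^sub>R A) = c *\<^sub>R cqA1E A"
  by (simp add: vec_eq_iff cq_entry split_paired_All scaleR_sum_right)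

lemma outer_nth: "outer u v $ i $ j = u $ i * cnj (v $ j)" by (simp add: outer_def)

lemma sandwich: "(A :: complex^'n^'m) ** outer u v ** adj B = outer (A *v u) (B *v v)"
proof -
  have "(A ** outer u v ** adj B) *v x = outer (A *v u) (B *v v) *v x" for x
  proof -
    have "(A ** outer u v ** adj B) *v x = A *v (outer u v *v (adj B *v x))"
      by (simp add: matrix_vector_mul_assoc matrix_mul_assoc)
    also have "\<dots> = cinner v (adj B *v x) *s (A *v u)" by (simp add: outer_mv vector_scalar_commute)
    also have "cinner v (adj B *v x) = cinner (B *v v) x"
      by (simp only: cinner_adj[of v "adj B" x] adj_adj)
    finally show ?thesis by (simp add: outer_mv)
  qed
  thus ?thesis by (simp add: matrix_eq)
qed

lemma c2: "complex_of_real (1 / sqrt 2) * cnj (complex_of_real (1 / sqrt 2)) = complex_of_real (1/2)"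
proof -
  have s: "sqrt 2 * sqrt 2 = (2::real)" by simp
  have "(1 / sqrt 2) * (1 / sqrt 2) = (1/2 :: real)" by (simp add: s)
  hence "complex_of_real (1 / sqrt 2) * complex_of_real (1 / sqrt 2) = complex_of_real (1/2)"
    by (simp only: of_real_mult[symmetric])
  thus ?thesis by (simp only: complex_cnj_complex_of_real)
qed

lemma outer_add_left: "outer (u + v) w = outer u w + outer v w"
  by (simp add: vec_eq_iff outer_nth distrib_right)
lemma outer_add_right: "outer w (u + v) = outer w u + outer w v"
  by (simp add: vec_eq_iff outer_nth distrib_left)
lemma outer_diff_left: "outer (u - v) w = outer u w - outer v w"
  by (simp add: vec_eq_iff outer_nth left_diff_distrib)
lemma outer_diff_right: "outer w (u - v) = outer w u - outer w v"
  by (simp add: vec_eq_iff outer_nth right_diff_distrib)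
lemma outer_c: "outer (complex_of_real (1 / sqrt 2) *s u) (complex_of_real (1 / sqrt 2) *s v) = (1/2::real) *\<^sub>R outer u v"
proof -
  have "complex_of_real (1 / sqrt 2) * a * cnj (complex_of_real (1 / sqrt 2) * b) = complex_of_real (1/2) * (a * cnj b)" for a b
  proof -
    have "complex_of_real (1 / sqrt 2) * a * cnj (complex_of_real (1 / sqrt 2) * b)
        = (complex_of_real (1 / sqrt 2) * cnj (complex_of_real (1 / sqrt 2))) * (a * cnj b)"
      by (simp only: complex_cnj_mult mult_ac)
    thus ?thesis by (simp only: c2)
  qed
  thus ?thesis by (simp add: vec_eq_iff outer_nth cscaleR)
qed

lemma matrix_add_rdist: "((B + C) ** (A :: complex^'p^'n)) = (B ** A) + (C ** A)"
  by (simp add: matrix_matrix_mult_def vec_eq_iff distrib_right sum.distrib)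

lemma parts:
  fixes W :: "complex^(2 \<times> 2)^'m"
  defines "x \<equiv> W *v ket (0, 0)" and "y \<equiv> W *v ket (1, 1)"
  shows "W ** outer (complex_of_real (1 / sqrt 2) *s (ket (0, 0) + ket (1, 1))) (complex_of_real (1 / sqrt 2) *s (ket (0, 0) + ket (1, 1))) ** adj W
          = (1/2 :: real) *\<^sub>R (outer x x + outer x y + outer y x + outer y y)"
    and "W ** outer (complex_of_real (1 / sqrt 2) *s (ket (0, 0) - ket (1, 1))) (complex_of_real (1 / sqrt 2) *s (ket (0, 0) - ket (1, 1))) ** adj W
          = (1/2 :: real) *\<^sub>R (outer x x - outer x y - outer y x + outer y y)"
    and "W ** (outer (ket (0, 0)) (ket (0, 0)) + outer (ket (1, 1)) (ket (1, 1))) ** adj W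
          = outer x x + outer y y"
proof -
  show "W ** outer (complex_of_real (1 / sqrt 2) *s (ket (0, 0) + ket (1, 1))) (complex_of_real (1 / sqrt 2) *s (ket (0, 0) + ket (1, 1))) ** adj W
          = (1/2 :: real) *\<^sub>R (outer x x + outer x y + outer y x + outer y y)"
    unfolding sandwich unfolding vector_scalar_commute mv_add x_def[symmetric] y_def[symmetric] outer_c
      outer_add_left outer_add_right by (simp only: add_ac)
  show "W ** outer (complex_of_real (1 / sqrt 2) *s (ket (0, 0) - ket (1, 1))) (complex_of_real (1 / sqrt 2) *s (ket (0, 0) - ket (1, 1))) ** adj W
          = (1/2 :: real) *\<^sub>R (outer x x - outer x y - outer y x + outer y y)"
    unfolding sandwich unfolding vector_scalar_commute mv_diff x_def[symmetric] y_def[symmetric] outer_c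
      outer_diff_left outer_diff_right by (simp add: algebra_simps)
  show "W ** (outer (ket (0, 0)) (ket (0, 0)) + outer (ket (1, 1)) (ket (1, 1))) ** adj W
          = outer x x + outer y y"
    unfolding matrix_add_ldistrib matrix_add_rdist sandwich x_def y_def ..
qed

lemma tensv_nth: "tensv u v $ (p, r) = u $ p * v $ r" by (simp add: tensv_def)

lemma sum_UNIV_prod: "(\<Sum>k\<in>(UNIV::('a::finite \<times> 'b::finite) set). f k) = (\<Sum>p\<in>UNIV. \<Sum>q\<in>UNIV. f (p, q))"
  by (simp add: UNIV_Times_UNIV[symmetric] sum.cartesian_product del: UNIV_Times_UNIV)

lemma kron_tensv: "kron A B *v tensv u z = tensv (A *v u) (B *v z)"
proof -
  have "(kron A B *v tensv u z) $ (r1, r2) = tensv (A *v u) (B *v z) $ (r1, r2)" for r1 r2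
  proof -
    have "(kron A B *v tensv u z) $ (r1, r2) = (\<Sum>p\<in>UNIV. \<Sum>q\<in>UNIV. (A $ r1 $ p * u $ p) * (B $ r2 $ q * z $ q))"
      by (simp add: matrix_vector_mult_def kron_def tensv_nth sum_UNIV_prod mult_ac)
    also have "\<dots> = (\<Sum>p\<in>UNIV. A $ r1 $ p * u $ p) * (\<Sum>q\<in>UNIV. B $ r2 $ q * z $ q)"
      by (simp add: sum_product)
    finally show ?thesis by (simp add: tensv_nth matrix_vector_mult_def)
  qed
  thus ?thesis by (simp add: vec_eq_iff split_paired_All)
qed

lemma tensv_add: "tensv u (v + w) = tensv u v + tensv u w"
  by (simp add: vec_eq_iff split_paired_All tensv_nth distrib_left)
lemma tensv_scale: "tensv u (c *s v) = c *s tensv u v"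
  by (simp add: vec_eq_iff split_paired_All tensv_nth mult_ac)

definition sl :: "complex^('a::finite \<times> 'b::finite \<times> 'e::finite) \<Rightarrow> 'a \<Rightarrow> 'b \<Rightarrow> complex^'e" where
  "sl x p q = (\<chi> i. x $ (p, q, i))"

lemma sl_add: "sl (x + y) p q = sl x p q + sl y p q" by (simp add: sl_def vec_eq_iff)
lemma sl_scale: "sl (c *s x) p q = c *s sl x p q" by (simp add: sl_def vec_eq_iff)
lemma sl_tens: "sl (tensv (ket p') (tensv (ket q') z)) p q = (if p = p' \<and> q = q' then z else 0)"
  by (simp add: sl_def vec_eq_iff tensv_nth ket_nth)

lemma cinner_tensv: "cinner (tensv u v) (tensv u' v') = cinner u u' * cinner v v'"
  by (simp add: cinner_def tensv_nth sum_UNIV_prod sum_product mult_ac)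

lemma norm_tensv_ket: "norm (tensv (ket p) z) = norm z"
proof -
  have "cinner (ket p) (ket p) = 1" by (simp add: cinner_def ket_nth if_distrib if_distribR cong: if_cong)
  hence "complex_of_real ((norm (tensv (ket p) z))^2) = complex_of_real ((norm z)^2)"
    by (simp only: cinner_self_real[symmetric] cinner_tensv mult_1)
  hence "(norm (tensv (ket p) z))^2 = (norm z)^2" by (simp only: of_real_eq_iff)
  thus ?thesis by (simp add: power2_eq_iff_nonneg)
qed

lemma cq_sym:
  fixes x y :: "complex^('a::finite \<times> 'b::finite \<times> 'e::finite)"
  shows "cqA1E (outer x y + outer y x) =
    symop UNIV (\<lambda>(p, q). tensv (ket p) (sl x p q)) (\<lambda>(p, q). tensv (ket p) (sl y p q))"
proof -
  have "cqA1E (outer x y + outer y x) $ (a1, i) $ (a2, j) =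
    symop UNIV (\<lambda>(p, q). tensv (ket p) (sl x p q)) (\<lambda>(p, q). tensv (ket p) (sl y p q)) $ (a1, i) $ (a2, j)"
    for a1 i a2 j
  proof -
    define g where "g = (\<lambda>p. \<Sum>q\<in>UNIV. x $ (p, q, i) * cnj (y $ (p, q, j)) + y $ (p, q, i) * cnj (x $ (p, q, j)))"
    have "symop UNIV (\<lambda>(p, q). tensv (ket p) (sl x p q)) (\<lambda>(p, q). tensv (ket p) (sl y p q)) $ (a1, i) $ (a2, j)
       = (\<Sum>p\<in>UNIV. if p = a1 then (if a2 = a1 then g p else 0) else 0)"
      unfolding symop_def sum_component sum_UNIV_prod g_def
      by (rule sum.cong[OF refl]) (auto simp: outer_nth tensv_nth ket_nth sl_def)
    also have "\<dots> = (if a1 = a2 then g a1 else 0)" by auto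
    also have "\<dots> = cqA1E (outer x y + outer y x) $ (a1, i) $ (a2, j)"
      by (simp add: cq_entry g_def outer_nth sum.distrib)
    finally show ?thesis by simp
  qed
  thus ?thesis by (simp add: vec_eq_iff split_paired_All)
qed

theorem mainTheorem6:
  fixes Q :: real and \<eta> :: complex
    and k0E k1E e0 e1 e2 e3 f0 f1 f2 f3 :: "complex^'e::finite"
    and Rw :: "complex^(2 \<times> 2)^(2 \<times> 2 \<times> 'e)"
    and V :: "complex^(2 \<times> 'e)^(2 \<times> 'e)"
    and e f :: "complex^'e"
  assumes Q: "0 \<le> Q" "Q \<le> 1"
    and eta: "cmod \<eta> \<le> 1"
    and onE: "norm k0E = 1" "norm k1E = 1" "cinner k0E k1E = 0"
    and e_def: "e = \<eta> *s k0E + complex_of_real (sqrt (1 - (cmod \<eta>)\<^sup>2)) *s k1E"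
    and f_def: "f = (- cnj \<eta>) *s k0E + complex_of_real (sqrt (1 - (cmod \<eta>)\<^sup>2)) *s k1E"
    and Rw00: "Rw *v ket (0, 0) =
        complex_of_real (sqrt (1 - Q)) *s tensv (ket 0) (tensv (ket 0) k0E)
      + complex_of_real (sqrt Q) *s tensv (ket 1) (tensv (ket 0) f)"
    and Rw11: "Rw *v ket (1, 1) =
        complex_of_real (sqrt Q) *s tensv (ket 0) (tensv (ket 1) e)
      + complex_of_real (sqrt (1 - Q)) *s tensv (ket 1) (tensv (ket 1) k0E)"
    and V_unitary: "unitary_mat V"
    and V1: "V *v tensv (ket 0) k0E = tensv (ket 0) e0 + tensv (ket 1) e1"
    and V2: "V *v tensv (ket 1) k0E = tensv (ket 0) e2 + tensv (ket 1) e3"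
    and V3: "V *v tensv (ket 0) f = tensv (ket 0) f0 + tensv (ket 1) f1"
    and V4: "V *v tensv (ket 1) e = tensv (ket 0) f2 + tensv (ket 1) f3"
    and norms1: "(norm e0)\<^sup>2 = 1 - Q" "(norm e3)\<^sup>2 = 1 - Q" "(norm f0)\<^sup>2 = 1 - Q" "(norm f3)\<^sup>2 = 1 - Q"
    and norms2: "(norm e1)\<^sup>2 = Q" "(norm e2)\<^sup>2 = Q" "(norm f1)\<^sup>2 = Q" "(norm f2)\<^sup>2 = Q"
  shows "let W = kron (mat 1 :: complex^2^2) V ** Rw;
             phiP = complex_of_real (1 / sqrt 2) *s (ket (0, 0) + ket (1, 1));
             phiM = complex_of_real (1 / sqrt 2) *s (ket (0, 0) - ket (1, 1));
             \<tau> = W ** outer phiP phiP ** adj W;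
             \<mu> = W ** outer phiM phiM ** adj W;
             \<sigma> = (1/2 :: real) *\<^sub>R (W ** (outer (ket (0, 0)) (ket (0, 0)) + outer (ket (1, 1)) (ket (1, 1))) ** adj W)
         in cqA1E \<sigma> = (1/2 :: real) *\<^sub>R cqA1E \<tau> + (1/2 :: real) *\<^sub>R cqA1E \<mu>
            \<and> (1/2) * trace_norm (cqA1E \<tau> - cqA1E \<mu>) \<le> 4 * Q * (1 - Q)"
proof -
  define W where "W = kron (mat 1 :: complex^2^2) V ** Rw"
  define x where "x = W *v ket (0, 0)"
  define y where "y = W *v ket (1, 1)"
  define r1 where "r1 = sqrt (1 - Q)"
  define r2 where "r2 = sqrt Q"
  have r1sq: "r1 * r1 = 1 - Q" using Q(2) by (simp add: r1_def)
  have r2sq: "r2 * r2 = Q" using Q(1) by (simp add: r2_def)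
  have r1p: "r1 \<ge> 0" and r2p: "r2 \<ge> 0" using Q by (simp_all add: r1_def r2_def)
  have nsq: "norm z = r1" if "(norm z)\<^sup>2 = 1 - Q" for z :: "complex^'e"
    using that by (metis r1_def norm_ge_zero real_sqrt_unique)
  have nsq2: "norm z = r2" if "(norm z)\<^sup>2 = Q" for z :: "complex^'e"
    using that by (metis r2_def norm_ge_zero real_sqrt_unique)
  have ne0: "norm e0 = r1" "norm e3 = r1" "norm f0 = r1" "norm f3 = r1"
    using norms1 nsq by blast+
  have ne1: "norm e1 = r2" "norm e2 = r2" "norm f1 = r2" "norm f2 = r2"
    using norms2 nsq2 by blast+
  have Wv: "W *v v = kron (mat 1 :: complex^2^2) V *v (Rw *v v)" for v
    by (simp add: W_def matrix_vector_mul_assoc)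
  have x_eq: "x = complex_of_real r1 *s tensv (ket 0) (tensv (ket 0) e0 + tensv (ket 1) e1)
        + complex_of_real r2 *s tensv (ket 1) (tensv (ket 0) f0 + tensv (ket 1) f1)"
    unfolding x_def Wv Rw00 mv_add vector_scalar_commute kron_tensv matrix_vector_mul_lid V1 V3 r1_def r2_def ..
  have y_eq: "y = complex_of_real r2 *s tensv (ket 0) (tensv (ket 0) f2 + tensv (ket 1) f3)
        + complex_of_real r1 *s tensv (ket 1) (tensv (ket 0) e2 + tensv (ket 1) e3)"
    unfolding y_def Wv Rw11 mv_add vector_scalar_commute kron_tensv matrix_vector_mul_lid V2 V4 r1_def r2_def ..
  have ns: "norm (complex_of_real r *s z) = \<bar>r\<bar> * norm z" for r and z :: "complex^'e"
    by (simp add: scaleR_cs[symmetric])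
  have two: "(p::2) = 0 \<or> p = 1" for p
    using exhaust_2[of p] by auto
  have zo: "(0::2) \<noteq> 1" by simp
  have prod: "norm (sl x p q) * norm (sl y p q) = Q * (1 - Q)" for p q
  proof -
    have "(p = 0 \<or> p = 1) \<and> (q = 0 \<or> q = 1)" using two by blast
    thus ?thesis
    proof (elim conjE disjE)
      assume "p = 0" "q = 0"
      thus ?thesis using zo r1p r2p
        by (simp add: x_eq y_eq sl_add sl_scale sl_tens tensv_add tensv_scale ns ne0 ne1)
           (simp add: r1sq r2sq algebra_simps)
    next
      assume "p = 0" "q = 1"
      thus ?thesis using zo r1p r2p
        by (simp add: x_eq y_eq sl_add sl_scale sl_tens tensv_add tensv_scale ns ne0 ne1)
           (simp add: r1sq r2sq algebra_simps)
    next
      assume "p = 1" "q = 0"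
      thus ?thesis using zo r1p r2p
        by (simp add: x_eq y_eq sl_add sl_scale sl_tens tensv_add tensv_scale ns ne0 ne1)
           (simp add: r1sq r2sq algebra_simps)
    next
      assume "p = 1" "q = 1"
      thus ?thesis using zo r1p r2p
        by (simp add: x_eq y_eq sl_add sl_scale sl_tens tensv_add tensv_scale ns ne0 ne1)
           (simp add: r1sq r2sq algebra_simps)
    qed
  qed
  define phiP where "phiP = complex_of_real (1 / sqrt 2) *s (ket (0::2, 0::2) + ket (1, 1))"
  define phiM where "phiM = complex_of_real (1 / sqrt 2) *s (ket (0::2, 0::2) - ket (1, 1))"
  have tau: "W ** outer phiP phiP ** adj W = (1/2 :: real) *\<^sub>R (outer x x + outer x y + outer y x + outer y y)"
    unfolding phiP_def x_def y_def by (rule parts(1))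
  have mu: "W ** outer phiM phiM ** adj W = (1/2 :: real) *\<^sub>R (outer x x - outer x y - outer y x + outer y y)"
    unfolding phiM_def x_def y_def by (rule parts(2))
  have sig: "W ** (outer (ket (0, 0)) (ket (0, 0)) + outer (ket (1, 1)) (ket (1, 1))) ** adj W = outer x x + outer y y"
    unfolding x_def y_def by (rule parts(3))
  have P1: "cqA1E ((1/2 :: real) *\<^sub>R (W ** (outer (ket (0, 0)) (ket (0, 0)) + outer (ket (1, 1)) (ket (1, 1))) ** adj W))
      = (1/2 :: real) *\<^sub>R cqA1E (W ** outer phiP phiP ** adj W) + (1/2 :: real) *\<^sub>R cqA1E (W ** outer phiM phiM ** adj W)"
  proof -
    have "(1/2 :: real) *\<^sub>R (W ** outer phiP phiP ** adj W) + (1/2 :: real) *\<^sub>R (W ** outer phiM phiM ** adj W)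
        = (1/2 :: real) *\<^sub>R (W ** (outer (ket (0, 0)) (ket (0, 0)) + outer (ket (1, 1)) (ket (1, 1))) ** adj W)"
      unfolding tau mu sig by (simp add: vec_eq_iff cscaleR algebra_simps)
    thus ?thesis by (metis cq_add cq_scaleR)
  qed
  have D: "cqA1E (W ** outer phiP phiP ** adj W) - cqA1E (W ** outer phiM phiM ** adj W)
      = symop UNIV (\<lambda>(p, q). tensv (ket p) (sl x p q)) (\<lambda>(p, q). tensv (ket p) (sl y p q))"
  proof -
    have "W ** outer phiP phiP ** adj W - W ** outer phiM phiM ** adj W = outer x y + outer y x"
      unfolding tau mu by (simp add: vec_eq_iff cscaleR algebra_simps)
    thus ?thesis by (simp add: cq_diff[symmetric] cq_sym)
  qed
  have "trace_norm (symop UNIV (\<lambda>(p, q). tensv (ket p) (sl x p q)) (\<lambda>(p, q). tensv (ket p) (sl y p q)))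
      \<le> (\<Sum>k\<in>UNIV. 2 * norm ((\<lambda>(p, q). tensv (ket p) (sl x p q)) k) * norm ((\<lambda>(p, q). tensv (ket p) (sl y p q)) k))"
    by (rule tn_bound) simp
  also have "\<dots> = (\<Sum>k\<in>(UNIV :: (2 \<times> 2) set). 2 * (Q * (1 - Q)))"
    by (rule sum.cong[OF refl]) (auto simp: norm_tensv_ket prod mult.assoc)
  also have "\<dots> = 8 * (Q * (1 - Q))" by simp
  finally have P2: "(1/2) * trace_norm (cqA1E (W ** outer phiP phiP ** adj W) - cqA1E (W ** outer phiM phiM ** adj W)) \<le> 4 * Q * (1 - Q)"
    unfolding D by simp
  show ?thesis
    unfolding Let_def W_def[symmetric] phiP_def[symmetric] phiM_def[symmetric]
    using P1 P2 by blast
qed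

end
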